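(* Let $p$ be a prime, $q=p^l$, $m\ge1$, $n=2m$. Let $r=\rho(q-1)$ with $0\leqslant\rho\leqslant n-1$ and $\rho=2\rho'$ even, and let $I\subseteq M_r$ with $0\in I$. Let $V$ be an $\mathbb{F}_{q^2}$-subspace of $\mathbb{F}_{q^n}$ of dimension $m-\rho'$ over $\mathbb{F}_{q^2}$ and $\lambda\in\mathbb{F}_q^*$. Then the vector $x=(x_g)_{g\in\mathbb{F}_{q^n}^*}$ with $x_g=\lambda$ for $g\in V\setminus\{0\}$ and $x_g=0$ otherwise belongs to $\mathcal{C}_q(r,I,n)^*$.
   Context: Let $N=q^n-1$ and $\alpha$ a primitive element of $\mathbb{F}_{q^n}$. Every integer $0\le u\le q^n-1$ is written $u=\sum_{i=0}^{n-1}u_iq^i$, $u_i\in\{0,\dots,q-1\}$; $\mathrm{wt}_q(u)=\sum u_i$, $O(u)=\sum_{i\text{ odd}}u_i$, $E(u)=\sum_{i\text{ even}}u_i$. For $-1\le r<n(q-1)$, $Z_r=\{\alpha^u\mid 0<u\le q^n-1,\ \mathrm{wt}_q(u)\le n(q-1)-r-1\}$. For $0\le r\le n(q-1)$ and integer $k\ge0$, $\Theta^{(r)}_k=\{\alpha^u\mid 0\le u\le q^n-1,\ \mathrm{wt}_q(u)=n(q-1)-r,\ |O(u)-E(u)|=k\}$. $M_r$ is the set of even (resp. odd) integers $k\in[0,m(q-1)]$ when $r$ is even (resp. odd). For $I\subseteq M_r$: $\overline I=M_r\setminus I$, $Z_{r,I}=Z_r\cup\bigcup_{k\in\overline I}\Theta^{(r)}_k$.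 $\mathcal{C}_q(r,I,n)^*$ is the cyclic code of length $N$ over $\mathbb{F}_q$ with coordinates indexed by $\mathbb{F}_{q^n}^*$ consisting of all $x=(x_g)$ with $\sum_g x_g g^{u}=0$ for every $u\in[1,N]$ with $\alpha^u\in Z_{r,I}$. *)

theory Defs
  imports Main "HOL-Computational_Algebra.Primes"
begin

definition digit :: "nat \<Rightarrow> nat \<Rightarrow> nat \<Rightarrow> nat" where
  "digit q u i = (u div q ^ i) mod q"

definition wtq :: "nat \<Rightarrow> nat \<Rightarrow> nat \<Rightarrow> nat" where
  "wtq q n u = (\<Sum>i<n. digit q u i)"

definition Osum :: "nat \<Rightarrow> nat \<Rightarrow> nat \<Rightarrow> nat" where
  "Osum q n u = (\<Sum>i\<in>{i. i < n \<and> odd i}. digit q u i)"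

definition Esum :: "nat \<Rightarrow> nat \<Rightarrow> nat \<Rightarrow> nat" where
  "Esum q n u = (\<Sum>i\<in>{i. i < n \<and> even i}. digit q u i)"

definition Zset :: "nat \<Rightarrow> nat \<Rightarrow> 'a::field \<Rightarrow> nat \<Rightarrow> 'a set" where
  "Zset q n \<alpha> r = {\<alpha> ^ u | u. 0 < u \<and> u \<le> q ^ n - 1 \<and> wtq q n u + r + 1 \<le> n * (q - 1)}"

definition Theta :: "nat \<Rightarrow> nat \<Rightarrow> 'a::field \<Rightarrow> nat \<Rightarrow> nat \<Rightarrow> 'a set" where
  "Theta q n \<alpha> r k = {\<alpha> ^ u | u. u \<le> q ^ n - 1 \<and> wtq q n u + r = n * (q - 1)
      \<and> \<bar>int (Osum q n u) - int (Esum q n u)\<bar> = int k}"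

definition Mset :: "nat \<Rightarrow> nat \<Rightarrow> nat \<Rightarrow> nat set" where
  "Mset q m r = {k. k \<le> m * (q - 1) \<and> (even k \<longleftrightarrow> even r)}"

definition ZrI :: "nat \<Rightarrow> nat \<Rightarrow> nat \<Rightarrow> 'a::field \<Rightarrow> nat \<Rightarrow> nat set \<Rightarrow> 'a set" where
  "ZrI q n m \<alpha> r I = Zset q n \<alpha> r \<union> (\<Union>k \<in> Mset q m r - I. Theta q n \<alpha> r k)"

definition subfield_of_order :: "nat \<Rightarrow> 'a::field set" where
  "subfield_of_order q = {x. x ^ q = x}"

definition code :: "nat \<Rightarrow> nat \<Rightarrow> nat \<Rightarrow> 'a::{field,finite} \<Rightarrow> nat \<Rightarrow> nat set \<Rightarrow> ('a \<Rightarrow> 'a) set" where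
  "code q n m \<alpha> r I = {x. (\<forall>g. g \<noteq> 0 \<longrightarrow> x g \<in> subfield_of_order q) \<and>
      (\<forall>u \<in> {1..q ^ n - 1}. \<alpha> ^ u \<in> ZrI q n m \<alpha> r I \<longrightarrow>
          (\<Sum>g\<in>{g. g \<noteq> 0}. x g * g ^ u) = 0)}"

definition primitive_element :: "'a::field \<Rightarrow> bool" where
  "primitive_element \<alpha> \<longleftrightarrow> (\<forall>y. y \<noteq> 0 \<longrightarrow> (\<exists>u::nat. \<alpha> ^ u = y))"

definition is_subspace :: "'a::field set \<Rightarrow> 'a set \<Rightarrow> bool" where
  "is_subspace K V \<longleftrightarrow> 0 \<in> V \<and> (\<forall>x\<in>V. \<forall>y\<in>V. x + y \<in> V) \<and> (\<forall>c\<in>K. \<forall>x\<in>V. c * x \<in> V)"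

definition has_dim :: "'a::field set \<Rightarrow> 'a set \<Rightarrow> nat \<Rightarrow> bool" where
  "has_dim K V d \<longleftrightarrow> (\<exists>b::nat \<Rightarrow> 'a. (\<forall>i<d. b i \<in> V) \<and>
      V = {(\<Sum>i<d. c i * b i) | c. \<forall>i<d. c i \<in> K} \<and>
      (\<forall>c. (\<forall>i<d. c i \<in> K) \<longrightarrow> (\<Sum>i<d. c i * b i) = 0 \<longrightarrow> (\<forall>i<d. c i = 0)))"

end

theory Submission
  imports Defs "HOL-Number_Theory.Number_Theory"
begin


lemma digits_mod: "u mod q ^ n = (\<Sum>j<n. digit q u j * q ^ j)"
proof (induction n)
  case 0 then show ?case by simp
next
  case (Suc n)
  have "u mod q ^ Suc n = q ^ n * (u div q ^ n mod q) + u mod q ^ n"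
    unfolding power_Suc2 by (rule mod_mult2_eq)
  then show ?case using Suc by (simp add: digit_def mult.commute)
qed

lemma ineq_key:
  fixes q a b :: nat
  assumes q: "q \<ge> 2" and dv: "(q^2 - 1) dvd (a + q*b)" and pos: "a + b > 0"
  shows "a + b \<ge> 2*(q-1) \<and> (a + b = 2*(q-1) \<longrightarrow> a = q-1 \<and> b = q-1)"
proof -
  obtain t where t: "a + q*b = (q^2-1)*t" using dv by blast
  define Q where "Q = int q"
  define A where "A = int a"
  define B where "B = int b"
  define TT where "TT = int t"
  have q2: "int (q^2 - 1) = Q*Q - 1" using q by (simp add: Q_def power2_eq_square of_nat_diff)
  have e: "A + Q*B = (Q*Q - 1)*TT" using t q2 unfolding A_def B_def TT_def Q_def
    by (metis of_nat_add of_nat_mult)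
  have Q2: "Q \<ge> 2" using q Q_def by simp
  have A0: "A \<ge> 0" "B \<ge> 0" "TT \<ge> 0" by (simp_all add: A_def B_def TT_def)
  have "A + B = int (a + b)" by (simp add: A_def B_def)
  then have ABp: "A + B > 0" by (metis of_nat_0_less_iff pos)
  have Tp: "TT > 0"
  proof (rule ccontr)
    assume "\<not> TT > 0" then have "TT = 0" using A0 by simp
    then have "A + Q*B = 0" using e by simp
    moreover have "Q*B \<ge> B" using Q2 A0 by (simp add: mult_right_mono[of 1 Q B, simplified])
    ultimately show False using ABp A0 by arith
  qed
  have "Q*B \<le> (Q*Q-1)*TT" using e A0 by arith
  also have "\<dots> < Q*(Q*TT)" using Tp by (simp add: algebra_simps)
  finally have "B < Q*TT" using Q2 by (simp add: mult_less_cancel_left)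
  then have Bl: "B \<le> Q*TT - 1" by simp
  have key: "A + B - (TT+1)*(Q-1) = (Q-1)*(Q*TT - 1 - B)" using e by (simp add: algebra_simps)
  have nn: "(Q-1)*(Q*TT - 1 - B) \<ge> 0" using Bl Q2 by simp
  have ge: "A + B \<ge> (TT+1)*(Q-1)" using key nn by arith
  have ge2: "(TT+1)*(Q-1) \<ge> 2*(Q-1)" using Tp Q2 by (intro mult_right_mono) auto
  have r1: "A + B \<ge> 2*(Q-1)" using ge2 ge by (rule order.trans)
  have r2: "A + B = 2*(Q-1) \<Longrightarrow> A = Q-1 \<and> B = Q-1"
  proof -
    assume h: "A + B = 2*(Q-1)"
    have "(TT+1)*(Q-1) \<le> 2*(Q-1)" using ge h by arith
    then have "(TT + 1) * (Q - 1) \<le> 2 * (Q - 1)" by simp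
    then have "TT + 1 \<le> 2" using Q2 mult_le_cancel_right[of "TT+1" "Q-1" 2] by simp
    then have T1: "TT = 1" using Tp by arith
    have "(Q-1)*(Q*TT - 1 - B) = 0" using key h T1 by simp
    then have "B = Q - 1" using Q2 T1 by simp
    moreover have "A = Q - 1" using e T1 \<open>B = Q - 1\<close> by (simp add: algebra_simps)
    ultimately show ?thesis by simp
  qed
  show ?thesis
  proof (rule conjI)
    show "a + b \<ge> 2*(q-1)" using r1 q unfolding A_def B_def Q_def by arith
  next
    show "a + b = 2*(q-1) \<longrightarrow> a = q - 1 \<and> b = q - 1"
    proof
    assume h: "a + b = 2*(q-1)"
    then have "A + B = 2*(Q-1)" using q unfolding A_def B_def Q_def by arith
    then have "A = Q - 1 \<and> B = Q - 1" by (rule r2)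
    then show "a = q - 1 \<and> b = q - 1" using q unfolding A_def B_def Q_def by arith
    qed
  qed
qed

lemma power_card_minus1:
  fixes x :: "'a::{field,finite}"
  assumes "x \<noteq> 0"
  shows "x ^ (card (UNIV :: 'a set) - 1) = 1"
proof -
  have "(\<Prod>y\<in>UNIV-{0}. x * y) = x ^ card (UNIV - {0::'a}) * \<Prod>(UNIV-{0})"
    by (simp add: prod.distrib)
  also have "card (UNIV - {0::'a}) = card (UNIV :: 'a set) - 1" by (simp add: card_Diff_singleton)
  also have "(\<Prod>y\<in>UNIV-{0}. x * y) = (\<Prod>y\<in>UNIV-{0}. y)"
    by (rule prod.reindex_bij_witness[of _ "\<lambda>y. y / x" "\<lambda>y. x * y"]) (use assms in auto)
  finally have "\<Prod>(UNIV-{0::'a}) * 1 = x ^ (card (UNIV :: 'a set) - 1) * \<Prod>(UNIV-{0::'a})" by simp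
  moreover have "\<Prod>(UNIV-{0::'a}) \<noteq> 0" by (simp add: prod_zero_iff)
  ultimately show ?thesis by (metis mult.commute mult_left_cancel)
qed

lemma order_prim:
  fixes \<alpha> :: "'a::{field,finite}"
  assumes prim: "primitive_element \<alpha>" and a0: "\<alpha> \<noteq> 0" and s: "\<alpha> ^ s = 1"
  shows "(card (UNIV :: 'a set) - 1) dvd s"
proof -
  define N where "N = card (UNIV :: 'a set) - 1"
  have aN: "\<alpha> ^ N = 1" using power_card_minus1[OF a0] N_def by simp
  have small: "N \<le> k" if "0 < k" "\<alpha> ^ k = 1" for k
  proof -
    have "UNIV - {0} \<subseteq> (\<lambda>j. \<alpha> ^ j) ` {..<k}"
    proof
      fix y assume "y \<in> (UNIV::'a set) - {0}"
      then obtain u where u: "\<alpha> ^ u = y" using prim unfolding primitive_element_def by auto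
      have "\<alpha> ^ u = \<alpha> ^ (k * (u div k) + u mod k)" by (simp only: mult_div_mod_eq)
      also have "\<dots> = \<alpha> ^ (u mod k)" using that by (simp only: power_add power_mult that power_one mult_1)
      finally show "y \<in> (\<lambda>j. \<alpha> ^ j) ` {..<k}" using u that by auto
    qed
    then have "card (UNIV - {0::'a}) \<le> card ((\<lambda>j. \<alpha> ^ j) ` {..<k})" by (intro card_mono) auto
    also have "\<dots> \<le> k" using card_image_le[of "{..<k}"] by simp
    finally show ?thesis by (simp add: N_def card_Diff_singleton)
  qed
  have "\<alpha> ^ s = \<alpha> ^ (N * (s div N) + s mod N)" by (simp only: mult_div_mod_eq)
  also have "\<dots> = \<alpha> ^ (s mod N)" using aN by (simp only: power_add power_mult aN power_one mult_1)
  finally have sm: "\<alpha> ^ (s mod N) = 1" using s by simp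
  have N0: "N > 0"
  proof -
    have "card {0::'a, 1} \<le> card (UNIV :: 'a set)" by (intro card_mono) auto
    then show ?thesis by (simp add: N_def)
  qed
  show ?thesis
  proof (rule ccontr)
    assume "\<not> ?thesis"
    then have "s mod N > 0" unfolding N_def[symmetric] by (simp add: dvd_eq_mod_eq_0)
    then have "N \<le> s mod N" using small sm by blast
    moreover have "s mod N < N" using N0 by simp
    ultimately show False by simp
  qed
qed



lemma frob_add:
  fixes x y :: "'a::field"
  assumes "prime CHAR('a)" "Q = CHAR('a) ^ e"
  shows "(x + y) ^ Q = x ^ Q + y ^ Q"
  using freshmans_dream'[OF assms] .

lemma frob_neg:
  fixes y :: "'a::field"
  assumes "prime CHAR('a)" "Q = CHAR('a) ^ e"
  shows "(- y) ^ Q = - (y ^ Q)"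
proof -
  have Q0: "Q > 0" using assms prime_gt_0_nat by simp
  have "0 = (y + - y) ^ Q" using Q0 by simp
  also have "\<dots> = y ^ Q + (- y) ^ Q" by (rule frob_add[OF assms])
  finally show ?thesis by (simp add: eq_neg_iff_add_eq_0 add.commute)
qed

lemma K_card_zero:
  fixes K :: "'a::{field,finite} set"
  assumes "prime CHAR('a)" "Q = CHAR('a) ^ e" and K: "K = {x. x ^ Q = x}"
  shows "(of_nat (card K) :: 'a) = 0"
proof -
  have Q0: "Q > 0" using assms prime_gt_0_nat by simp
  have bij: "bij_betw (\<lambda>y. y + 1) K K"
  proof (rule bij_betw_byWitness[of _ "\<lambda>y. y - 1"])
    show "(\<lambda>y. y + 1) ` K \<subseteq> K" using K frob_add[OF assms(1,2)] by auto
    have "(y - 1) ^ Q = y ^ Q - 1" for y :: 'a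
      using frob_add[OF assms(1,2), of y "-1"] frob_neg[OF assms(1,2), of 1] by simp
    then show "(\<lambda>y. y - 1) ` K \<subseteq> K" using K by auto
  qed auto
  have "(\<Sum>y\<in>K. y) = (\<Sum>y\<in>K. y + 1)"
    using sum.reindex_bij_betw[OF bij, of "\<lambda>y. y"] by simp
  also have "\<dots> = (\<Sum>y\<in>K. y) + of_nat (card K)" by (simp add: sum.distrib)
  finally show ?thesis by simp
qed

lemma K_powsum_zero:
  fixes K :: "'a::{field,finite} set"
  assumes K: "K = {x. x ^ Q = x}" and b: "\<beta> \<in> K" "\<beta> \<noteq> 0" "\<beta> ^ E \<noteq> 1"
  shows "(\<Sum>x\<in>K. x ^ E) = 0"
proof -
  have bQ: "\<beta> ^ Q = \<beta>" using b K by simp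
  have bij: "bij_betw (\<lambda>y. \<beta> * y) K K"
  proof (rule bij_betw_byWitness[of _ "\<lambda>y. inverse \<beta> * y"])
    show "(\<lambda>y. \<beta> * y) ` K \<subseteq> K" using K bQ by (auto simp: power_mult_distrib)
    show "(\<lambda>y. inverse \<beta> * y) ` K \<subseteq> K" using K bQ by (auto simp: power_mult_distrib power_inverse)
  qed (use b in auto)
  have "(\<Sum>x\<in>K. x ^ E) = (\<Sum>x\<in>K. (\<beta> * x) ^ E)"
    using sum.reindex_bij_betw[OF bij, of "\<lambda>y. y ^ E"] by simp
  also have "\<dots> = \<beta> ^ E * (\<Sum>x\<in>K. x ^ E)" by (simp add: power_mult_distrib sum_distrib_left)
  finally have "(\<beta> ^ E - 1) * (\<Sum>x\<in>K. x ^ E) = 0" by (simp add: algebra_simps)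
  then show ?thesis using b by simp
qed



lemma card_fibres:
  fixes d :: nat and \<sigma> :: "'b \<Rightarrow> nat"
  assumes "finite S" "\<sigma> ` S \<subseteq> {..<d}"
  shows "card S = (\<Sum>i<d. card {t\<in>S. \<sigma> t = i})"
proof -
  have "(\<Sum>y<d. card {x\<in>S. \<sigma> x = y}) = card S"
    using sum.group[OF assms(1) finite_lessThan[of d] assms(2), of "\<lambda>_. 1::nat"] by simp
  then show ?thesis by simp
qed

lemma card_digits:
  assumes "\<And>j. P j \<Longrightarrow> j < n"
  shows "card (SIGMA j:{j. P j}. {..<digit q u j}) = (\<Sum>j\<in>{j. P j}. digit q u j)"
proof -
  have "{j. P j} \<subseteq> {..<n}" using assms by blast
  then have "finite {j. P j}" by (rule finite_subset) simp
  then show ?thesis by (simp add: card_SigmaI)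
qed

lemma cong_qpow:
  fixes q :: nat assumes "q \<ge> 2"
  shows "[q ^ j = (if even j then 1 else q)] (mod (q^2 - 1))"
proof -
  have c2: "[q^2 = 1] (mod (q^2 - 1))" using assms by (subst cong_altdef_nat) auto
  obtain k where k: "j = 2*k \<or> j = 2*k+1" by (metis evenE oddE)
  have ck: "[q^(2*k) = 1] (mod (q^2 - 1))" using cong_pow[OF c2, of k] by (simp add: power_mult)
  show ?thesis
  proof (cases "j = 2*k")
    case True then show ?thesis using ck by simp
  next
    case False
    then have j: "j = 2*k+1" using k by simp
    have "[q^(2*k) * q = 1 * q] (mod (q^2 - 1))" by (rule cong_mult[OF ck cong_refl])
    then show ?thesis using j by (simp only: power_Suc2 Suc_eq_plus1[symmetric] if_False mult_1 even_Suc even_mult_iff even_numeral simp_thms)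
  qed
qed



lemma core:
  fixes b :: "nat \<Rightarrow> 'a::{field,finite}" and K :: "'a set" and V :: "'a set"
  assumes pc: "prime CHAR('a)" and qd: "q = CHAR('a) ^ l" and q2: "q \<ge> 2"
    and K: "K = {x. x ^ (q^2) = x}"
    and hS: "\<And>E. (\<Sum>x\<in>K. x ^ E) \<noteq> 0 \<Longrightarrow> E > 0 \<and> (q^2 - 1) dvd E"
    and hu: "u < q ^ n"
    and V: "V = {(\<Sum>i<d. c i * b i) | c. \<forall>i<d. c i \<in> K}"
    and ind: "\<forall>c. (\<forall>i<d. c i \<in> K) \<longrightarrow> (\<Sum>i<d. c i * b i) = 0 \<longrightarrow> (\<forall>i<d. c i = 0)"
    and nz: "(\<Sum>g\<in>V. g ^ u) \<noteq> 0"
  shows "2*d*(q-1) \<le> wtq q n u \<and> (wtq q n u = 2*d*(q-1) \<longrightarrow> Osum q n u = Esum q n u)"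
proof -
  define C where "C = PiE {..<d} (\<lambda>_. K)"
  define \<phi> where "\<phi> c = (\<Sum>i<d. c i * b i)" for c :: "nat \<Rightarrow> 'a"
  have Qe: "q^2 = CHAR('a) ^ (l*2)" by (simp add: qd power_mult)
  have Kdiff: "x - y \<in> K" if "x \<in> K" "y \<in> K" for x y
  proof -
    have "(x + - y) ^ (q^2) = x ^ (q^2) + (- y) ^ (q^2)" by (rule frob_add[OF pc Qe])
    also have "\<dots> = x - y" using frob_neg[OF pc Qe, of y] that K by simp
    finally show ?thesis using K by simp
  qed
  have finK: "finite K" by simp
  have finC: "finite C" unfolding C_def by (intro finite_PiE) auto
  have VC: "V = \<phi> ` C"
  proof
    show "V \<subseteq> \<phi> ` C"
    proof
      fix g assume "g \<in> V"
      then obtain c where c: "g = (\<Sum>i<d. c i * b i)" "\<forall>i<d. c i \<in> K" using V by auto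
      have "restrict c {..<d} \<in> C" using c(2) unfolding C_def by auto
      moreover have "\<phi> (restrict c {..<d}) = g" unfolding \<phi>_def c(1) by (intro sum.cong) auto
      ultimately show "g \<in> \<phi> ` C" by (metis image_eqI)
    qed
    show "\<phi> ` C \<subseteq> V" unfolding C_def \<phi>_def V by (auto simp: PiE_iff)
  qed
  have inj: "inj_on \<phi> C"
  proof
    fix c c' assume cc: "c \<in> C" "c' \<in> C" "\<phi> c = \<phi> c'"
    have "(\<Sum>i<d. (c i - c' i) * b i) = \<phi> c - \<phi> c'"
      unfolding \<phi>_def by (simp add: sum_subtractf left_diff_distrib)
    also have "\<dots> = 0" using cc by simp
    finally have z: "(\<Sum>i<d. (c i - c' i) * b i) = 0" .
    have dK: "\<forall>i<d. c i - c' i \<in> K" using cc(1,2) Kdiff unfolding C_def by (auto simp: PiE_iff)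
    have ind': "\<And>c. (\<forall>i<d. c i \<in> K) \<Longrightarrow> (\<Sum>i<d. c i * b i) = 0 \<Longrightarrow> \<forall>i<d. c i = 0"
      using ind by blast
    have "\<forall>i<d. c i - c' i = 0" using ind'[of "\<lambda>i. c i - c' i"] dK z by simp
    then show "c = c'" using cc(1,2) unfolding C_def by (intro PiE_ext) auto
  qed
  have S1: "(\<Sum>g\<in>V. g ^ u) = (\<Sum>c\<in>C. \<phi> c ^ u)" by (simp add: VC sum.reindex[OF inj])
  define T where "T = (SIGMA j:{..<n}. {..<digit q u j})"
  have finT: "finite T" unfolding T_def by auto
  have uT: "u = (\<Sum>t\<in>T. q ^ fst t)"
  proof -
    have "(\<Sum>t\<in>T. q ^ fst t) = (\<Sum>(j,s)\<in>T. q ^ j)" by (simp add: split_def)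
    also have "\<dots> = (\<Sum>j<n. \<Sum>s<digit q u j. q ^ j)"
      unfolding T_def by (rule sum.Sigma[symmetric]) auto
    also have "\<dots> = (\<Sum>j<n. digit q u j * q ^ j)" by simp
    also have "\<dots> = u mod q ^ n" by (simp add: digits_mod)
    also have "\<dots> = u" using hu by simp
    finally show ?thesis by simp
  qed
  have frob: "(\<Sum>i<d. f i) ^ (q ^ j) = (\<Sum>i<d. f i ^ (q ^ j))" for f :: "nat \<Rightarrow> 'a" and j
    by (rule freshmans_dream_sum'[OF pc, of _ "l*j"]) (simp add: qd power_mult)
  define P where "P = PiE T (\<lambda>_. {..<d})"
  have finP: "finite P" unfolding P_def using finT by (intro finite_PiE) auto
  define F where "F c \<sigma> = (\<Prod>t\<in>T. c (\<sigma> t) ^ (q ^ fst t))" for c :: "nat \<Rightarrow> 'a" and \<sigma>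
  define B where "B \<sigma> = (\<Prod>t\<in>T. b (\<sigma> t) ^ (q ^ fst t))" for \<sigma>
  have expand: "\<phi> c ^ u = (\<Sum>\<sigma>\<in>P. B \<sigma> * F c \<sigma>)" for c
  proof -
    have "\<phi> c ^ u = (\<Prod>t\<in>T. \<phi> c ^ (q ^ fst t))" by (subst uT) (rule power_sum)
    also have "\<dots> = (\<Prod>t\<in>T. \<Sum>i<d. c i ^ (q ^ fst t) * b i ^ (q ^ fst t))"
      unfolding \<phi>_def by (simp add: frob power_mult_distrib)
    also have "\<dots> = (\<Sum>\<sigma>\<in>P. \<Prod>t\<in>T. c (\<sigma> t) ^ (q ^ fst t) * b (\<sigma> t) ^ (q ^ fst t))"
      unfolding P_def by (rule prod_sum_PiE) (use finT in auto)
    also have "\<dots> = (\<Sum>\<sigma>\<in>P. B \<sigma> * F c \<sigma>)"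
      unfolding B_def F_def by (simp add: prod.distrib mult.commute)
    finally show ?thesis .
  qed
  define E where "E \<sigma> i = (\<Sum>t\<in>{t\<in>T. \<sigma> t = i}. q ^ fst t)" for \<sigma> :: "nat \<times> nat \<Rightarrow> nat" and i
  have inner: "(\<Sum>c\<in>C. F c \<sigma>) = (\<Prod>i<d. \<Sum>x\<in>K. x ^ E \<sigma> i)" if s: "\<sigma> \<in> P" for \<sigma>
  proof -
    have im: "\<sigma> ` T \<subseteq> {..<d}" using s unfolding P_def by auto
    have "F c \<sigma> = (\<Prod>i<d. c i ^ E \<sigma> i)" for c
    proof -
      have "F c \<sigma> = (\<Prod>i<d. \<Prod>t\<in>{t\<in>T. \<sigma> t = i}. c (\<sigma> t) ^ (q ^ fst t))"
        unfolding F_def using prod.group[OF finT finite_lessThan[of d] im, of "\<lambda>t. c (\<sigma> t) ^ (q ^ fst t)"]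
        by simp
      also have "\<dots> = (\<Prod>i<d. \<Prod>t\<in>{t\<in>T. \<sigma> t = i}. c i ^ (q ^ fst t))"
        by (intro prod.cong refl) auto
      also have "\<dots> = (\<Prod>i<d. c i ^ E \<sigma> i)" unfolding E_def by (simp add: power_sum)
      finally show ?thesis .
    qed
    then have "(\<Sum>c\<in>C. F c \<sigma>) = (\<Sum>c\<in>C. \<Prod>i<d. c i ^ E \<sigma> i)" by simp
    also have "\<dots> = (\<Prod>i<d. \<Sum>x\<in>K. x ^ E \<sigma> i)"
      unfolding C_def by (rule prod_sum_PiE[symmetric]) auto
    finally show ?thesis .
  qed
  have expall: "(\<Sum>c\<in>C. \<phi> c ^ u) = (\<Sum>\<sigma>\<in>P. B \<sigma> * (\<Prod>i<d. \<Sum>x\<in>K. x ^ E \<sigma> i))"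
  proof -
    have "(\<Sum>c\<in>C. \<phi> c ^ u) = (\<Sum>c\<in>C. \<Sum>\<sigma>\<in>P. B \<sigma> * F c \<sigma>)" by (simp add: expand)
    also have "\<dots> = (\<Sum>\<sigma>\<in>P. \<Sum>c\<in>C. B \<sigma> * F c \<sigma>)" by (rule sum.swap)
    also have "\<dots> = (\<Sum>\<sigma>\<in>P. B \<sigma> * (\<Sum>c\<in>C. F c \<sigma>))" by (simp add: sum_distrib_left)
    also have "\<dots> = (\<Sum>\<sigma>\<in>P. B \<sigma> * (\<Prod>i<d. \<Sum>x\<in>K. x ^ E \<sigma> i))"
      by (intro sum.cong refl) (simp add: inner)
    finally show ?thesis .
  qed
  have ex: "\<exists>\<sigma>\<in>P. B \<sigma> * (\<Prod>i<d. \<Sum>x\<in>K. x ^ E \<sigma> i) \<noteq> 0"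
  proof (rule ccontr)
    assume "\<not> ?thesis"
    then have "\<forall>\<sigma>\<in>P. B \<sigma> * (\<Prod>i<d. \<Sum>x\<in>K. x ^ E \<sigma> i) = 0" by blast
    then have "(\<Sum>\<sigma>\<in>P. B \<sigma> * (\<Prod>i<d. \<Sum>x\<in>K. x ^ E \<sigma> i)) = 0" by (rule sum.neutral)
    then show False using nz S1 expall by simp
  qed
  then obtain \<sigma> where s: "\<sigma> \<in> P" and snz: "B \<sigma> * (\<Prod>i<d. \<Sum>x\<in>K. x ^ E \<sigma> i) \<noteq> 0"
    by blast
  have good: "E \<sigma> i > 0 \<and> (q^2 - 1) dvd E \<sigma> i" if "i < d" for i
    using snz that hS by auto
  have im: "\<sigma> ` T \<subseteq> {..<d}" using s unfolding P_def by auto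
  define A where "A i = card {t\<in>T. even (fst t) \<and> \<sigma> t = i}" for i
  define Bo where "Bo i = card {t\<in>T. odd (fst t) \<and> \<sigma> t = i}" for i
  have bnd: "A i + Bo i \<ge> 2*(q-1) \<and> (A i + Bo i = 2*(q-1) \<longrightarrow> A i = q-1 \<and> Bo i = q-1)"
    if i: "i < d" for i
  proof -
    define Ti where "Ti = {t\<in>T. \<sigma> t = i}"
    have finTi: "finite Ti" unfolding Ti_def using finT by auto
    have "[E \<sigma> i = (\<Sum>t\<in>Ti. if even (fst t) then 1 else q)] (mod (q^2 - 1))"
      unfolding E_def Ti_def[symmetric] by (rule cong_sum) (rule cong_qpow[OF q2])
    also have "(\<Sum>t\<in>Ti. if even (fst t) then 1 else q) = A i + q * Bo i"
    proof -
      have "(\<Sum>t\<in>Ti. if even (fst t) then 1 else q)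
          = (\<Sum>t\<in>Ti \<inter> {t. even (fst t)}. 1) + (\<Sum>t\<in>Ti \<inter> - {t. even (fst t)}. q)"
        by (rule sum.If_cases[OF finTi])
      also have "Ti \<inter> {t. even (fst t)} = {t\<in>T. even (fst t) \<and> \<sigma> t = i}" unfolding Ti_def by auto
      also have "Ti \<inter> - {t. even (fst t)} = {t\<in>T. odd (fst t) \<and> \<sigma> t = i}" unfolding Ti_def by auto
      finally show ?thesis unfolding A_def Bo_def by (simp add: mult.commute)
    qed
    finally have cg: "[E \<sigma> i = A i + q * Bo i] (mod (q^2 - 1))" .
    have dv: "(q^2 - 1) dvd (A i + q * Bo i)" using good[OF i] cong_dvd_iff[OF cg] by simp
    have pos: "A i + Bo i > 0"
    proof (rule ccontr)
      assume "\<not> A i + Bo i > 0"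
      then have "A i = 0" "Bo i = 0" by auto
      then have "{t\<in>T. even (fst t) \<and> \<sigma> t = i} = {}" "{t\<in>T. odd (fst t) \<and> \<sigma> t = i} = {}"
        unfolding A_def Bo_def using finT by auto
      then have "Ti = {}" unfolding Ti_def by blast
      then have "E \<sigma> i = 0" unfolding E_def Ti_def[symmetric] by simp
      then show False using good[OF i] by simp
    qed
    show ?thesis using ineq_key[OF q2 dv pos] .
  qed
  have finTe: "finite {t\<in>T. even (fst t)}" "finite {t\<in>T. odd (fst t)}" using finT by auto
  have sA: "(\<Sum>i<d. A i) = Esum q n u"
  proof -
    have "{t\<in>T. even (fst t)} = (SIGMA j:{j. j < n \<and> even j}. {..<digit q u j})" unfolding T_def by auto
    then have "card {t\<in>T. even (fst t)} = Esum q n u"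
      unfolding Esum_def by (simp add: card_digits)
    moreover have "card {t\<in>T. even (fst t)} = (\<Sum>i<d. A i)"
      unfolding A_def using card_fibres[OF finTe(1), of \<sigma> d] im by (auto intro!: sum.cong arg_cong[where f=card])
    ultimately show ?thesis by simp
  qed
  have sB: "(\<Sum>i<d. Bo i) = Osum q n u"
  proof -
    have "{t\<in>T. odd (fst t)} = (SIGMA j:{j. j < n \<and> odd j}. {..<digit q u j})" unfolding T_def by auto
    then have "card {t\<in>T. odd (fst t)} = Osum q n u"
      unfolding Osum_def by (simp add: card_digits)
    moreover have "card {t\<in>T. odd (fst t)} = (\<Sum>i<d. Bo i)"
      unfolding Bo_def using card_fibres[OF finTe(2), of \<sigma> d] im by (auto intro!: sum.cong arg_cong[where f=card])
    ultimately show ?thesis by simp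
  qed
  have sW: "wtq q n u = Esum q n u + Osum q n u"
  proof -
    have "{..<n} = {j. j < n \<and> even j} \<union> {j. j < n \<and> odd j}" by auto
    then have "wtq q n u = (\<Sum>j\<in>{j. j < n \<and> even j} \<union> {j. j < n \<and> odd j}. digit q u j)"
      unfolding wtq_def by simp
    also have "\<dots> = Esum q n u + Osum q n u" unfolding Esum_def Osum_def
      by (rule sum.union_disjoint) auto
    finally show ?thesis .
  qed
  have wsum: "wtq q n u = (\<Sum>i<d. A i + Bo i)" using sW sA sB by (simp add: sum.distrib)
  have ge: "2*d*(q-1) \<le> wtq q n u"
  proof -
    have "2*d*(q-1) = (\<Sum>i<d. 2*(q-1))" by simp
    also have "\<dots> \<le> (\<Sum>i<d. A i + Bo i)" by (rule sum_mono) (use bnd in auto)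
    finally show ?thesis using wsum by simp
  qed
  moreover have "Osum q n u = Esum q n u" if eq: "wtq q n u = 2*d*(q-1)"
  proof -
    have "(\<Sum>i<d. (A i + Bo i) - 2*(q-1)) = (\<Sum>i<d. A i + Bo i) - (\<Sum>i<d. 2*(q-1))"
      by (rule sum_subtractf_nat) (use bnd in auto)
    also have "\<dots> = 0" using eq wsum by simp
    finally have "\<forall>i<d. (A i + Bo i) - 2*(q-1) = 0" by simp
    then have all: "\<forall>i<d. A i = q - 1 \<and> Bo i = q - 1" using bnd by (meson diff_is_0_eq le_antisym)
    then have "(\<Sum>i<d. A i) = (\<Sum>i<d. Bo i)" by (intro sum.cong) auto
    then show ?thesis using sA sB by simp
  qed
  ultimately show ?thesis by blast
qed



theorem lemma5p4:
  fixes \<alpha> lam :: "'a::{field,finite}" and V :: "'a set"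
    and p l q m n \<rho> \<rho>' r :: nat and I :: "nat set"
  assumes "prime p" and "l \<ge> 1" and "q = p ^ l"
    and "m \<ge> 1" and "n = 2 * m"
    and "card (UNIV :: 'a set) = q ^ n"
    and "primitive_element \<alpha>"
    and "r = \<rho> * (q - 1)" and "\<rho> \<le> n - 1" and "\<rho> = 2 * \<rho>'"
    and "I \<subseteq> Mset q m r" and "0 \<in> I"
    and "is_subspace (subfield_of_order (q ^ 2)) V"
    and "has_dim (subfield_of_order (q ^ 2)) V (m - \<rho>')"
    and "lam \<in> subfield_of_order q" and "lam \<noteq> 0"
  shows "(\<lambda>g. if g \<in> V - {0} then lam else 0) \<in> code q n m \<alpha> r I"
proof -
  note A = assms
  define d where "d = m - \<rho>'"
  define K where "K = {x::'a. x ^ (q^2) = x}"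
  define N where "N = q ^ n - 1"
  define Q where "Q = q ^ 2"
  have p2: "p \<ge> 2" using A(1) prime_ge_2_nat by blast
  have q2: "q \<ge> 2"
  proof -
    have "p ^ 1 \<le> p ^ l" using A(2) p2 by (intro power_increasing) auto
    then show ?thesis using p2 A(3) by simp
  qed
  have rho: "\<rho>' < m" using A(4,9,10,5) by arith
  have dn: "2*d + \<rho> = n" using rho A(5,10) d_def by simp
  have d1: "d \<ge> 1" using rho d_def by simp
  have nqr: "n*(q-1) = 2*d*(q-1) + r" using dn A(8) by (metis add_mult_distrib)
  have charpos: "CHAR('a) > 0" by (rule finite_imp_CHAR_pos) simp
  have pc: "prime CHAR('a)" by (rule prime_CHAR_semidom[OF charpos])
  have "CHAR('a) dvd p ^ (l*n)" using CHAR_dvd_CARD[where 'a='a] A(6) A(3) by (simp add: power_mult)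
  then have "CHAR('a) dvd p" using pc prime_dvd_power by blast
  then have chp: "CHAR('a) = p" using pc A(1) primes_dvd_imp_eq by blast
  have qd: "q = CHAR('a) ^ l" using chp A(3) by simp
  have Qe: "Q = CHAR('a) ^ (l*2)" by (simp add: Q_def qd power_mult)
  have qn: "q ^ n \<ge> q ^ 2" using A(4,5) q2 by (intro power_increasing) auto
  have Q2: "Q \<ge> 4" using mult_le_mono[OF q2 q2] Q_def by (simp add: power2_eq_square)
  have cardN: "card (UNIV :: 'a set) - 1 = N" using A(6) N_def by simp
  have a0: "\<alpha> \<noteq> 0"
  proof
    assume a: "\<alpha> = 0"
    have "UNIV \<subseteq> {0, 1::'a}"
    proof
      fix y :: 'a
      show "y \<in> {0, 1}"
      proof (cases "y = 0")
        case False
        then obtain u where "\<alpha> ^ u = y" using A(7) unfolding primitive_element_def by blast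
        then show ?thesis using a by (cases u) auto
      qed simp
    qed
    then have "card (UNIV :: 'a set) \<le> 2" using card_mono[of "{0,1::'a}" UNIV] by (simp add: card_insert_if)
    then show False using A(6) qn Q2 Q_def by simp
  qed
  have aN: "\<alpha> ^ N = 1" using power_card_minus1[OF a0] cardN by simp
  have aord: "N dvd s" if "\<alpha> ^ s = 1" for s using order_prim[OF A(7) a0 that] cardN by simp
  have QN: "(Q - 1) dvd N"
  proof -
    have c: "[Q = 1] (mod (Q - 1))" using Q2 by (subst cong_altdef_nat) auto
    have "[Q ^ m = 1 ^ m] (mod (Q - 1))" by (rule cong_pow[OF c])
    then have "(Q - 1) dvd (Q ^ m - 1)" using Q2 by (subst (asm) cong_altdef_nat) auto
    moreover have "Q ^ m = q ^ n" using A(5) Q_def by (simp add: power_mult)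
    ultimately show ?thesis using N_def by simp
  qed
  define M where "M = N div (Q - 1)"
  have NM: "N = M * (Q - 1)" using QN M_def by simp
  have M0: "M > 0" using NM N_def qn Q2 Q_def by (cases "M = 0") auto
  define \<beta> where "\<beta> = \<alpha> ^ M"
  have MQ: "M * Q = N + M" using NM Q2 by (simp add: algebra_simps)
  have bK: "\<beta> \<in> K"
  proof -
    have "\<beta> ^ (q^2) = \<alpha> ^ (M * Q)" unfolding \<beta>_def Q_def by (simp add: power_mult)
    also have "\<dots> = \<beta>" unfolding MQ \<beta>_def by (simp add: power_add aN)
    finally show ?thesis unfolding K_def by simp
  qed
  have b0: "\<beta> \<noteq> 0" using a0 \<beta>_def by simp
  have KQ: "K = {x. x ^ Q = x}" using K_def Q_def by simp
  have hS: "E > 0 \<and> (q^2 - 1) dvd E" if nzE: "(\<Sum>x\<in>K. x ^ E) \<noteq> 0" for E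
  proof
    show "E > 0"
    proof (rule ccontr)
      assume "\<not> E > 0"
      then have "(\<Sum>x\<in>K. x ^ E) = of_nat (card K)" by simp
      also have "\<dots> = 0" by (rule K_card_zero[OF pc Qe KQ])
      finally show False using nzE by simp
    qed
    show "(q^2 - 1) dvd E"
    proof (rule ccontr)
      assume nd: "\<not> (q^2 - 1) dvd E"
      have "\<beta> ^ E \<noteq> 1"
      proof
        assume "\<beta> ^ E = 1"
        then have "\<alpha> ^ (M * E) = 1" unfolding \<beta>_def by (simp add: power_mult)
        then have "N dvd M * E" by (rule aord)
        then have "M * (Q - 1) dvd M * E" using NM by simp
        then have "(Q - 1) dvd E" using M0 by simp
        then show False using nd Q_def by simp
      qed
      then have "(\<Sum>x\<in>K. x ^ E) = 0" by (rule K_powsum_zero[OF KQ bK b0])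
      then show False using nzE by simp
    qed
  qed
  obtain b where bV: "\<forall>i<d. b i \<in> V"
      and Vb: "V = {(\<Sum>i<d. c i * b i) | c. \<forall>i<d. c i \<in> K}"
      and ind: "\<forall>c. (\<forall>i<d. c i \<in> K) \<longrightarrow> (\<Sum>i<d. c i * b i) = 0 \<longrightarrow> (\<forall>i<d. c i = 0)"
    using A(14) unfolding has_dim_def d_def[symmetric] subfield_of_order_def K_def by blast
  have part1: "\<forall>g. g \<noteq> 0 \<longrightarrow> (if g \<in> V - {0} then lam else 0) \<in> subfield_of_order q"
    using A(15) q2 unfolding subfield_of_order_def by auto
  have part2: "(\<Sum>g\<in>{g. g \<noteq> 0}. (if g \<in> V - {0} then lam else 0) * g ^ u) = 0"
    if u: "u \<in> {1..q ^ n - 1}" "\<alpha> ^ u \<in> ZrI q n m \<alpha> r I" for u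
  proof -
    have key: "(\<Sum>g\<in>{g. g \<noteq> 0}. (if g \<in> V - {0} then lam else 0) * g ^ u) = 0"
      if eq: "\<alpha> ^ u = \<alpha> ^ u'" and u'0: "0 < u'" and u'n: "u' < q ^ n"
        and bad: "\<not> (2*d*(q-1) \<le> wtq q n u' \<and> (wtq q n u' = 2*d*(q-1) \<longrightarrow> Osum q n u' = Esum q n u'))"
      for u'
    proof -
      have gu: "g ^ u = g ^ u'" if g0: "g \<noteq> 0" for g :: 'a
      proof -
        obtain s where s: "\<alpha> ^ s = g" using A(7) g0 unfolding primitive_element_def by blast
        have "g ^ u = (\<alpha> ^ u) ^ s" unfolding s[symmetric] by (simp add: power_mult[symmetric] mult.commute)
        also have "\<dots> = (\<alpha> ^ u') ^ s" using eq by simp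
        also have "\<dots> = g ^ u'" unfolding s[symmetric] by (simp add: power_mult[symmetric] mult.commute)
        finally show ?thesis .
      qed
      have "(\<Sum>g\<in>{g. g \<noteq> 0}. (if g \<in> V - {0} then lam else 0) * g ^ u)
          = (\<Sum>g\<in>{g. g \<noteq> 0}. if g \<in> V - {0} then lam * g ^ u' else 0)"
        by (intro sum.cong refl) (auto simp: gu)
      also have "\<dots> = (\<Sum>g\<in>{x\<in>{g. g \<noteq> 0}. x \<in> V - {0}}. lam * g ^ u')"
        by (rule sum.inter_filter[symmetric]) simp
      also have "{x\<in>{g. g \<noteq> 0}. x \<in> V - {0}} = V - {0}" by auto
      also have "(\<Sum>g\<in>V - {0}. lam * g ^ u') = lam * (\<Sum>g\<in>V. g ^ u')"
        using u'0 by (simp add: sum_diff1 sum_distrib_left[symmetric])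
      also have "(\<Sum>g\<in>V. g ^ u') = 0"
      proof (rule ccontr)
        assume "(\<Sum>g\<in>V. g ^ u') \<noteq> 0"
        from core[OF pc qd q2 K_def hS u'n Vb ind this] bad show False by blast
      qed
      finally show ?thesis by simp
    qed
    have "\<alpha> ^ u \<in> Zset q n \<alpha> r \<or> (\<exists>k \<in> Mset q m r - I. \<alpha> ^ u \<in> Theta q n \<alpha> r k)"
      using u(2) unfolding ZrI_def by blast
    then show ?thesis
    proof
      assume "\<alpha> ^ u \<in> Zset q n \<alpha> r"
      then obtain u' where u': "\<alpha> ^ u = \<alpha> ^ u'" "0 < u'" "u' \<le> q ^ n - 1" "wtq q n u' + r + 1 \<le> n * (q - 1)"
        unfolding Zset_def by blast
      have "u' < q ^ n" using u'(3) qn Q2 Q_def by linarith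
      moreover have "wtq q n u' < 2*d*(q-1)" using u'(4) nqr by linarith
      ultimately show ?thesis using key[OF u'(1,2)] by linarith
    next
      assume "\<exists>k \<in> Mset q m r - I. \<alpha> ^ u \<in> Theta q n \<alpha> r k"
      then obtain k u' where k: "k \<in> Mset q m r" "k \<notin> I" and u': "\<alpha> ^ u = \<alpha> ^ u'" "u' \<le> q ^ n - 1"
          "wtq q n u' + r = n * (q - 1)" "\<bar>int (Osum q n u') - int (Esum q n u')\<bar> = int k"
        unfolding Theta_def by blast
      have w: "wtq q n u' = 2*d*(q-1)" using u'(3) nqr by linarith
      have u'0: "0 < u'"
      proof (rule ccontr)
        assume "\<not> 0 < u'"
        then have "wtq q n u' = 0" by (simp add: wtq_def digit_def)
        moreover have "2*d*(q-1) > 0" using d1 q2 by simp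
        ultimately show False using w by simp
      qed
      have "u' < q ^ n" using u'(2) qn Q2 Q_def by linarith
      moreover have "Osum q n u' \<noteq> Esum q n u'"
      proof
        assume "Osum q n u' = Esum q n u'"
        then have "k = 0" using u'(4) by simp
        then show False using k A(12) by simp
      qed
      ultimately show ?thesis using key[OF u'(1) u'0] w by blast
    qed
  qed
  show ?thesis unfolding code_def using part1 part2 by blast
qed


end
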